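(* Let $\underline{X}$ be an observation from a distribution $P_{(\theta,\underline{\eta})}$ indexed by $(\theta,\underline{\eta})$ in a parameter space $H$, with $\theta$ a real parameter of interest, and fix $\alpha\in[0,1]$. For a confidence interval $C(\underline{X})=[L(\underline{X}),U(\underline{X})]$ for $\theta$, define its modification $C^M$ by $$T(\underline{x},\theta_0)=\min\{\theta_0-L(\underline{x}),\,U(\underline{x})-\theta_0\},\quad h(\underline{x},\theta_0)=\sup_{(\theta,\underline{\eta})\in H,\ \theta=\theta_0}P_{(\theta,\underline{\eta})}\big(T(\underline{X},\theta_0)\le T(\underline{x},\theta_0)\big),$$ $$C^M(\underline{x})=\overline{\{\theta_0: h(\underline{x},\theta_0)>\alpha\}}.$$ Let $C_0(\underline{X})$ be a $1-\alpha$ exact confidence interval for $\theta$, set $C_0^{M0}=C_0$ and $C_0^{M(k+1)}=(C_0^{Mk})^M$ for $k\ge0$, and let $C_0^{M\infty}(\underline{x})=\bigcap_{k=0}^{\infty}C_0^{Mk}(\underline{x})$. Then: (i) $C_0^{Mk}(\underline{x})$, as a set of $\theta$, is nonincreasing in $k\ge0$; (ii) $C_0^{M\infty}(\underline{X})$, which is contained in $C_0^{Mk}(\underline{X})$ for every $k$, is a $1-\alpha$ exact confidence interval; (iii) if $C_0^{Mk}(\underline{X})=C_0^{M(k+1)}(\underline{X})$ for some $k\ge0$, then $C_0^{M\infty}(\underline{X})=C_0^{Mk}(\underline{X})$.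
   Context: For a set $A$ of parameter values in $\mathbb{R}$, $\overline{A}$ denotes the smallest closed simply connected set (closed interval) containing $A$. An interval $C(\underline{X})$ for $\theta$ is "$1-\alpha$ exact" if $\inf_{(\theta,\underline{\eta})\in H}P_{(\theta,\underline{\eta})}(\theta\in C(\underline{X}))\ge1-\alpha$. *)

theory Defs
  imports "HOL-Probability.Probability"
begin

definition interval_hull :: "real set \<Rightarrow> real set" where
  "interval_hull A = \<Inter>{S. closed S \<and> is_interval S \<and> A \<subseteq> S}"

text \<open>Lower and upper endpoints of an interval-valued set C(x) = [L(x),U(x)],
  taken in the extended reals (so that empty or unbounded intervals are allowed).\<close>
definition lower_end :: "real set \<Rightarrow> ereal" where
  "lower_end S = (INF s\<in>S. ereal s)"

definition upper_end :: "real set \<Rightarrow> ereal" where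
  "upper_end S = (SUP s\<in>S. ereal s)"

definition Tstat :: "('x \<Rightarrow> real set) \<Rightarrow> 'x \<Rightarrow> real \<Rightarrow> ereal" where
  "Tstat C x t0 = min (ereal t0 - lower_end (C x)) (upper_end (C x) - ereal t0)"

text \<open>Here a parameter is p :: 'p,
  its component of interest is th p, and the distribution is P p.\<close>
definition hfun :: "'p set \<Rightarrow> ('p \<Rightarrow> real) \<Rightarrow> ('p \<Rightarrow> 'x measure)
    \<Rightarrow> ('x \<Rightarrow> real set) \<Rightarrow> 'x \<Rightarrow> real \<Rightarrow> ereal" where
  "hfun H th P C x t0 =
     (SUP p\<in>{p\<in>H. th p = t0}.
        ereal (measure (P p) {y \<in> space (P p). Tstat C y t0 \<le> Tstat C x t0}))"

definition modif :: "real \<Rightarrow> 'p set \<Rightarrow> ('p \<Rightarrow> real) \<Rightarrow> ('p \<Rightarrow> 'x measure)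
    \<Rightarrow> ('x \<Rightarrow> real set) \<Rightarrow> ('x \<Rightarrow> real set)" where
  "modif \<alpha> H th P C = (\<lambda>x. interval_hull {t0. hfun H th P C x t0 > ereal \<alpha>})"

definition exact_ci :: "real \<Rightarrow> 'p set \<Rightarrow> ('p \<Rightarrow> real) \<Rightarrow> ('p \<Rightarrow> 'x measure)
    \<Rightarrow> ('x \<Rightarrow> real set) \<Rightarrow> bool" where
  "exact_ci \<alpha> H th P C \<longleftrightarrow>
     (INF p\<in>H. ereal (measure (P p) {y \<in> space (P p). th p \<in> C y})) \<ge> ereal (1 - \<alpha>)"

end

theory Submission imports Defs begin

lemma chain_seq:
  fixes A :: "ereal set" assumes "A \<noteq> {}"
  shows "\<exists>f. incseq f \<and> range f \<subseteq> A \<and> (\<forall>a\<in>A. \<exists>n. a \<le> f n)"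
proof (cases "Sup A \<in> A")
  case True
  then show ?thesis by (intro exI[of _ "\<lambda>_. Sup A"]) (auto simp: incseq_def Sup_upper)
next
  case False
  obtain f :: "nat \<Rightarrow> ereal" where f: "incseq f" "range f \<subseteq> A" "Sup A = (SUP i. f i)"
    using Sup_countable_SUP[OF assms] by blast
  have "\<exists>n. a \<le> f n" if "a \<in> A" for a
  proof -
    have "a < Sup A" using that False by (metis Sup_upper order_le_less)
    then show ?thesis using f(3) by (auto simp: less_SUP_iff intro: less_imp_le)
  qed
  then show ?thesis using f by blast
qed

lemma superuniform:
  fixes T :: "'x \<Rightarrow> ereal"
  assumes M: "prob_space M" and meas: "\<And>t. {y\<in>space M. T y \<le> t} \<in> sets M" and a: "0 \<le> a"
  shows "{y\<in>space M. measure M {z\<in>space M. T z \<le> T y} \<le> a} \<in> sets M \<and>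
         measure M {y\<in>space M. measure M {z\<in>space M. T z \<le> T y} \<le> a} \<le> a"
proof -
  interpret prob_space M by (rule M)
  define F where "F t = measure M {z\<in>space M. T z \<le> t}" for t
  have Fmono: "F s \<le> F t" if "s \<le> t" for s t
    unfolding F_def using that meas by (intro finite_measure_mono) (auto intro: order_trans)
  define S where "S = {y\<in>space M. F (T y) \<le> a}"
  show ?thesis
  proof (cases "S = {}")
    case True
    then have e: "{y\<in>space M. measure M {z\<in>space M. T z \<le> T y} \<le> a} = {}" by (simp add: S_def F_def)
    show ?thesis unfolding e using a by simp
  next
    case False
    then obtain f where f: "incseq f" "range f \<subseteq> T ` S" "\<forall>b\<in>T ` S. \<exists>n. b \<le> f n"
      using chain_seq[of "T ` S"] by blast
    define B where "B n = {z\<in>space M. T z \<le> f n}" for n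
    have Fa: "F (f n) \<le> a" for n
    proof -
      have "f n \<in> T ` S" using f(2) by auto
      then show ?thesis by (auto simp: S_def)
    qed
    have SB: "S = (\<Union>n. B n)"
    proof
      show "S \<subseteq> (\<Union>n. B n)" using f(3) unfolding B_def S_def by auto
      show "(\<Union>n. B n) \<subseteq> S"
      proof
        fix z assume "z \<in> (\<Union>n. B n)"
        then obtain n where "z \<in> space M" "T z \<le> f n" by (auto simp: B_def)
        then show "z \<in> S" using Fmono[of "T z" "f n"] Fa[of n] by (auto simp: S_def)
      qed
    qed
    moreover have Bs: "range B \<subseteq> sets M" using meas by (auto simp: B_def)
    moreover have "incseq B" using f(1) by (auto simp: incseq_def B_def intro: order_trans)
    ultimately have lim: "(\<lambda>n. measure M (B n)) \<longlonglongrightarrow> measure M S"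
      using finite_Lim_measure_incseq by simp
    have "measure M S \<le> a"
      by (rule LIMSEQ_le_const2[OF lim]) (use Fa in \<open>auto simp: B_def F_def\<close>)
    moreover have "S \<in> sets M" using SB Bs by auto
    ultimately show ?thesis by (simp add: S_def F_def)
  qed
qed

lemma is_interval_Inter_real: "\<forall>S\<in>K. is_interval (S::real set) \<Longrightarrow> is_interval (\<Inter>K)"
  unfolding is_interval_1 by blast

lemma hull_closed: "closed (interval_hull A)"
  unfolding interval_hull_def by auto

lemma hull_interval: "is_interval (interval_hull A)"
  unfolding interval_hull_def by (rule is_interval_Inter_real) auto

lemma hull_sub: "closed S \<Longrightarrow> is_interval S \<Longrightarrow> A \<subseteq> S \<Longrightarrow> interval_hull A \<subseteq> S"
  unfolding interval_hull_def by auto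

lemma hull_upper: "A \<subseteq> interval_hull A"
  unfolding interval_hull_def by auto

lemma T_nonneg: "t \<in> C x \<Longrightarrow> 0 \<le> Tstat C x t"
proof -
  assume t: "t \<in> C x"
  have l: "lower_end (C x) \<le> ereal t" unfolding lower_end_def using t by (rule INF_lower)
  have u: "ereal t \<le> upper_end (C x)" unfolding upper_end_def using t by (rule SUP_upper)
  have "0 \<le> ereal t - lower_end (C x)" using l by (cases "lower_end (C x)") auto
  moreover have "0 \<le> upper_end (C x) - ereal t" using u by (cases "upper_end (C x)") auto
  ultimately show ?thesis unfolding Tstat_def by simp
qed

lemma T_neg:
  assumes c: "closed (C x)" and i: "is_interval (C x)" and t: "t \<notin> C x"
  shows "Tstat C x t < 0"
proof -
  obtain e where e: "e > 0" "ball t e \<inter> C x = {}"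
    proof -
    have "open (- C x)" using c by (simp add: closed_def)
    then obtain e where "e > 0" "ball t e \<subseteq> - C x" using t open_contains_ball by blast
    then show ?thesis using that by blast
  qed
  have far: "\<bar>s - t\<bar> \<ge> e" if "s \<in> C x" for s
  proof (rule ccontr)
    assume "\<not> ?thesis"
    then have "s \<in> ball t e" by (simp add: dist_real_def abs_minus_commute)
    then show False using e that by blast
  qed
  have side: "(\<forall>s\<in>C x. s > t) \<or> (\<forall>s\<in>C x. s < t)"
  proof (rule ccontr)
    assume "\<not> ?thesis"
    then obtain a b where "a \<in> C x" "b \<in> C x" "a \<le> t" "t \<le> b" by (auto simp: not_less)
    then have "t \<in> C x" using i unfolding is_interval_1 by blast
    then show False using t by simp
  qed
  then show ?thesis
  proof
    assume h: "\<forall>s\<in>C x. s > t"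
    have "ereal (t + e) \<le> lower_end (C x)" unfolding lower_end_def
    proof (rule INF_greatest)
      fix s assume "s \<in> C x" then show "ereal (t + e) \<le> ereal s" using far[of s] h by auto
    qed
    then have "ereal t - lower_end (C x) < 0" using e(1) by (cases "lower_end (C x)") auto
    then show ?thesis unfolding Tstat_def by (simp add: min_less_iff_disj)
  next
    assume h: "\<forall>s\<in>C x. s < t"
    have "upper_end (C x) \<le> ereal (t - e)" unfolding upper_end_def
    proof (rule SUP_least)
      fix s assume "s \<in> C x" then show "ereal s \<le> ereal (t - e)" using far[of s] h by auto
    qed
    then have "upper_end (C x) - ereal t < 0" using e(1) by (cases "upper_end (C x)") auto
    then show ?thesis unfolding Tstat_def by (simp add: min_less_iff_disj)
  qed
qed

lemma modif_sub:
  assumes prob: "\<forall>p\<in>H. prob_space (P p)"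
    and c: "closed (C x)" and i: "is_interval (C x)"
    and ex: "exact_ci \<alpha> H th P C"
    and m1: "\<forall>p\<in>H. \<forall>t0. {y \<in> space (P p). t0 \<in> C y} \<in> sets (P p)"
    and m2: "\<forall>p\<in>H. \<forall>t0 t. {y \<in> space (P p). Tstat C y t0 \<le> t} \<in> sets (P p)"
  shows "modif \<alpha> H th P C x \<subseteq> C x"
proof -
  have "{t0. hfun H th P C x t0 > ereal \<alpha>} \<subseteq> C x"
  proof
    fix t0 assume h: "t0 \<in> {t0. hfun H th P C x t0 > ereal \<alpha>}"
    show "t0 \<in> C x"
    proof (rule ccontr)
      assume t: "t0 \<notin> C x"
      have neg: "Tstat C x t0 < 0" using T_neg[of C x t0] c i t by blast
      have "hfun H th P C x t0 \<le> ereal \<alpha>" unfolding hfun_def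
      proof (rule SUP_least)
        fix p assume p: "p \<in> {p\<in>H. th p = t0}"
        interpret prob_space "P p" using prob p by auto
        have A: "{y \<in> space (P p). t0 \<in> C y} \<in> sets (P p)" using m1 p by auto
        have "{y \<in> space (P p). Tstat C y t0 \<le> Tstat C x t0} \<subseteq> space (P p) - {y \<in> space (P p). t0 \<in> C y}"
        proof
          fix y assume y: "y \<in> {y \<in> space (P p). Tstat C y t0 \<le> Tstat C x t0}"
          have "t0 \<notin> C y"
          proof
            assume "t0 \<in> C y"
            then have "0 \<le> Tstat C y t0" by (rule T_nonneg)
            then show False using y neg by auto
          qed
          then show "y \<in> space (P p) - {y \<in> space (P p). t0 \<in> C y}" using y by auto
        qed
        then have "measure (P p) {y \<in> space (P p). Tstat C y t0 \<le> Tstat C x t0}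
            \<le> measure (P p) (space (P p) - {y \<in> space (P p). t0 \<in> C y})"
          using m2 p A by (intro finite_measure_mono) auto
        also have "\<dots> = 1 - measure (P p) {y \<in> space (P p). t0 \<in> C y}"
          using prob_compl[OF A] .
        also have "\<dots> \<le> \<alpha>"
        proof -
          have "ereal (1 - \<alpha>) \<le> ereal (measure (P p) {y \<in> space (P p). th p \<in> C y})"
            using ex p unfolding exact_ci_def le_INF_iff by auto
          then show ?thesis using p by auto
        qed
        finally show "ereal (measure (P p) {y \<in> space (P p). Tstat C y t0 \<le> Tstat C x t0}) \<le> ereal \<alpha>"
          by simp
      qed
      then show False using h by auto
    qed
  qed
  then show ?thesis unfolding modif_def by (rule hull_sub[OF c i])
qed

lemma modif_exact:
  assumes prob: "\<forall>p\<in>H. prob_space (P p)" and a: "0 \<le> \<alpha>"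
    and m1: "\<forall>p\<in>H. \<forall>t0. {y \<in> space (P p). t0 \<in> modif \<alpha> H th P C y} \<in> sets (P p)"
    and m2: "\<forall>p\<in>H. \<forall>t0 t. {y \<in> space (P p). Tstat C y t0 \<le> t} \<in> sets (P p)"
  shows "exact_ci \<alpha> H th P (modif \<alpha> H th P C)"
  unfolding exact_ci_def le_INF_iff
proof
  fix p assume p: "p \<in> H"
  interpret prob_space "P p" using prob p by auto
  define T where "T y = Tstat C y (th p)" for y
  define S where "S = {y\<in>space (P p). measure (P p) {z\<in>space (P p). T z \<le> T y} \<le> \<alpha>}"
  have su: "S \<in> sets (P p) \<and> measure (P p) S \<le> \<alpha>"
  proof -
    have "prob_space (P p)" using prob p by blast
    moreover have "{y\<in>space (P p). T y \<le> t} \<in> sets (P p)" for t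
      using m2 p unfolding T_def by blast
    ultimately show ?thesis unfolding S_def using superuniform[of "P p" T \<alpha>] a by blast
  qed
  have A: "{y \<in> space (P p). th p \<in> modif \<alpha> H th P C y} \<in> sets (P p)" using m1 p by auto
  have sub: "space (P p) - {y \<in> space (P p). th p \<in> modif \<alpha> H th P C y} \<subseteq> S"
  proof
    fix y assume y: "y \<in> space (P p) - {y \<in> space (P p). th p \<in> modif \<alpha> H th P C y}"
    show "y \<in> S"
    proof (rule ccontr)
      assume "y \<notin> S"
      moreover have "y \<in> space (P p)" using y by blast
      ultimately have gt: "measure (P p) {z\<in>space (P p). T z \<le> T y} > \<alpha>" unfolding S_def by simp
      have "ereal (measure (P p) {z\<in>space (P p). T z \<le> T y}) \<le> hfun H th P C y (th p)"
        unfolding hfun_def T_def using p by (intro SUP_upper) simp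
      moreover have "ereal \<alpha> < ereal (measure (P p) {z\<in>space (P p). T z \<le> T y})" using gt by simp
      ultimately have "hfun H th P C y (th p) > ereal \<alpha>" by (rule order.strict_trans2[rotated])
      then have "th p \<in> {t0. hfun H th P C y t0 > ereal \<alpha>}" by simp
      then have "th p \<in> interval_hull {t0. hfun H th P C y t0 > ereal \<alpha>}" using hull_upper by (rule subsetD[rotated])
      then have "th p \<in> modif \<alpha> H th P C y" by (simp add: modif_def)
      then show False using y by blast
    qed
  qed
  have "measure (P p) (space (P p) - {y \<in> space (P p). th p \<in> modif \<alpha> H th P C y}) \<le> \<alpha>"
    using finite_measure_mono[OF sub] su by linarith
  then show "ereal (1 - \<alpha>) \<le> ereal (measure (P p) {y \<in> space (P p). th p \<in> modif \<alpha> H th P C y})"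
    using prob_compl[OF A] by simp
qed

theorem theorem3:
  fixes H :: "'p set" and th :: "'p \<Rightarrow> real" and P :: "'p \<Rightarrow> 'x measure"
    and \<alpha> :: real and C0 :: "'x \<Rightarrow> real set"
  assumes prob: "\<forall>p\<in>H. prob_space (P p)"
    and alpha: "0 \<le> \<alpha>" "\<alpha> \<le> 1"
    and interval: "\<forall>x. \<exists>L U. L \<le> U \<and> C0 x = {L..U}"
    and exact0: "exact_ci \<alpha> H th P C0"
    and meas: "\<forall>p\<in>H. \<forall>k t0. \<forall>t::ereal.
        {y \<in> space (P p). t0 \<in> ((modif \<alpha> H th P) ^^ k) C0 y} \<in> sets (P p) \<and>
        {y \<in> space (P p). Tstat (((modif \<alpha> H th P) ^^ k) C0) y t0 \<le> t} \<in> sets (P p)"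
  defines "CM \<equiv> \<lambda>k. ((modif \<alpha> H th P) ^^ k) C0"
    and "Cinf \<equiv> \<lambda>x. \<Inter>k. ((modif \<alpha> H th P) ^^ k) C0 x"
  shows "(\<forall>k x. CM (Suc k) x \<subseteq> CM k x)
       \<and> (\<forall>k x. Cinf x \<subseteq> CM k x)
       \<and> (\<forall>x. closed (Cinf x) \<and> is_interval (Cinf x))
       \<and> exact_ci \<alpha> H th P Cinf
       \<and> (\<forall>k. CM k = CM (Suc k) \<longrightarrow> Cinf = CM k)"
proof -
  define M where "M = modif \<alpha> H th P"
  have CMS: "CM (Suc k) = M (CM k)" for k unfolding CM_def M_def by simp
  have Cinf': "Cinf x = (\<Inter>k. CM k x)" for x unfolding Cinf_def CM_def by simp
  have m1: "\<forall>p\<in>H. \<forall>t0. {y \<in> space (P p). t0 \<in> CM k y} \<in> sets (P p)" for k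
    using meas unfolding CM_def by blast
  have m2: "\<forall>p\<in>H. \<forall>t0 t. {y \<in> space (P p). Tstat (CM k) y t0 \<le> t} \<in> sets (P p)" for k
    using meas unfolding CM_def by blast
  have ci: "closed (CM k x) \<and> is_interval (CM k x)" for k x
  proof (cases k)
    case 0
    then obtain L U where "C0 x = {L..U}" using interval by blast
    then show ?thesis using 0 by (simp add: CM_def is_interval_cc)
  next
    case (Suc j)
    then show ?thesis using CMS hull_closed hull_interval by (simp add: M_def modif_def)
  qed
  have ex: "exact_ci \<alpha> H th P (CM k)" for k
  proof (cases k)
    case 0
    then show ?thesis using exact0 by (simp add: CM_def)
  next
    case (Suc j)
    have "exact_ci \<alpha> H th P (modif \<alpha> H th P (CM j))"
      using modif_exact[OF prob alpha(1), of th "CM j"] m1[of "Suc j"] m2[of j] CMS[of j]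
      unfolding M_def by simp
    then show ?thesis using Suc CMS[of j] unfolding M_def by simp
  qed
  have mono: "CM (Suc k) x \<subseteq> CM k x" for k x
    using modif_sub[OF prob _ _ ex[of k] m1[of k] m2[of k], where x=x] ci[of k x] CMS[of k] unfolding M_def by simp
  have dec: "CM j x \<subseteq> CM i x" if "i \<le> j" for i j x
    using that by (induction j rule: dec_induct) (use mono in blast)+
  have sub: "Cinf x \<subseteq> CM k x" for k x unfolding Cinf' by blast
  have cl: "closed (Cinf x) \<and> is_interval (Cinf x)" for x
    unfolding Cinf' using ci by (auto intro!: is_interval_Inter_real)
  have exinf: "exact_ci \<alpha> H th P Cinf"
    unfolding exact_ci_def le_INF_iff
  proof
    fix p assume p: "p \<in> H"
    interpret prob_space "P p" using prob p by blast
    define A where "A k = {y \<in> space (P p). th p \<in> CM k y}" for k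
    have As: "range A \<subseteq> sets (P p)" using m1 p unfolding A_def by blast
    have Ad: "decseq A" unfolding decseq_def A_def using dec by blast
    have "(\<Inter>k. A k) = {y \<in> space (P p). th p \<in> Cinf y}" unfolding A_def Cinf' by blast
    then have lim: "(\<lambda>k. measure (P p) (A k)) \<longlonglongrightarrow> measure (P p) {y \<in> space (P p). th p \<in> Cinf y}"
      using finite_Lim_measure_decseq[OF As Ad] by simp
    have "1 - \<alpha> \<le> measure (P p) (A k)" for k
      using ex[of k] p unfolding exact_ci_def le_INF_iff A_def by auto
    then have "1 - \<alpha> \<le> measure (P p) {y \<in> space (P p). th p \<in> Cinf y}"
      by (intro LIMSEQ_le_const[OF lim]) auto
    then show "ereal (1 - \<alpha>) \<le> ereal (measure (P p) {y \<in> space (P p). th p \<in> Cinf y})" by simp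
  qed
  have stab: "Cinf = CM k" if eq: "CM k = CM (Suc k)" for k
  proof -
    have st: "CM j = CM k" if "k \<le> j" for j
      using that
    proof (induction j rule: dec_induct)
      case base then show ?case by simp
    next
      case (step j)
      have "CM (Suc j) = M (CM j)" by (rule CMS)
      also have "\<dots> = M (CM k)" using step.IH by simp
      also have "\<dots> = CM (Suc k)" by (rule CMS[symmetric])
      also have "\<dots> = CM k" by (rule eq[symmetric])
      finally show ?case .
    qed
    have "CM k x \<subseteq> CM j x" for j x
    proof (cases "j \<le> k")
      case True then show ?thesis using dec by blast
    next
      case False then show ?thesis using st[of j] by simp
    qed
    then have "Cinf x = CM k x" for x unfolding Cinf' by blast
    then show ?thesis by blast
  qed
  show ?thesis using mono sub cl exinf stab by blast
qed

end
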